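(* Let $3\le n\le m$ and let $G=P_n\square P_m$ be the grid graph. Then every minimal resolving set of $G$ has cardinality at most $2n-2$, and there exists a minimal resolving set of $G$ of cardinality exactly $2n-2$; that is, the largest cardinality of a minimal resolving set of $G$ is $2n-2$.
   Context: The grid graph $P_n\square P_m$ has vertex set $\{(i,j):0\le i\le n-1,\ 0\le j\le m-1\}$, with $(i,j)$ adjacent to $(k,l)$ iff $|i-k|+|j-l|=1$; the distance is $d((i,j),(k,l))=|i-k|+|j-l|$. A vertex $w$ resolves two vertices $u,v$ if $d(w,u)\ne d(w,v)$. A set $R$ of vertices is resolving if every pair of distinct vertices is resolved by some vertex of $R$. A minimal resolving set is a resolving set $R$ such that no $R\setminus\{v\}$, $v\in R$, is resolving. *)

theory Defs
  imports Main
begin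

definition grid_vertices :: "nat \<Rightarrow> nat \<Rightarrow> (nat \<times> nat) set" where
  "grid_vertices n m = {(i, j). i < n \<and> j < m}"

definition grid_dist :: "nat \<times> nat \<Rightarrow> nat \<times> nat \<Rightarrow> nat" where
  "grid_dist u v = nat \<bar>int (fst u) - int (fst v)\<bar> + nat \<bar>int (snd u) - int (snd v)\<bar>"

definition resolves :: "nat \<times> nat \<Rightarrow> nat \<times> nat \<Rightarrow> nat \<times> nat \<Rightarrow> bool" where
  "resolves w u v \<longleftrightarrow> grid_dist w u \<noteq> grid_dist w v"

definition resolving_set :: "nat \<Rightarrow> nat \<Rightarrow> (nat \<times> nat) set \<Rightarrow> bool" where
  "resolving_set n m R \<longleftrightarrow> R \<subseteq> grid_vertices n m \<and>
     (\<forall>u\<in>grid_vertices n m. \<forall>v\<in>grid_vertices n m. u \<noteq> v \<longrightarrow> (\<exists>w\<in>R. resolves w u v))"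

definition minimal_resolving_set :: "nat \<Rightarrow> nat \<Rightarrow> (nat \<times> nat) set \<Rightarrow> bool" where
  "minimal_resolving_set n m R \<longleftrightarrow> resolving_set n m R \<and>
     (\<forall>v\<in>R. \<not> resolving_set n m (R - {v}))"

end

theory Submission
  imports Defs
begin

lemma nat_abs_sum_eq:
  fixes A B C D :: int
  shows "(nat \<bar>A\<bar> + nat \<bar>B\<bar> = nat \<bar>C\<bar> + nat \<bar>D\<bar>) = (\<bar>A\<bar>+\<bar>B\<bar> = \<bar>C\<bar>+\<bar>D\<bar>)"
  by (simp add: nat_add_distrib[symmetric] eq_nat_nat_iff)

lemma res_int: "resolves (x,y) (a,b) (c,d) \<longleftrightarrow>
   \<bar>int x - int a\<bar> + \<bar>int y - int b\<bar> \<noteq> \<bar>int x - int c\<bar> + \<bar>int y - int d\<bar>"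
  unfolding resolves_def grid_dist_def by (simp add: nat_abs_sum_eq)

lemma res_sym: "resolves w u v = resolves w v u"
  unfolding resolves_def by auto

lemma odd_case:
  fixes x y a b c d :: int
  assumes "odd (a+b+c+d)"
  shows "\<bar>x - a\<bar> + \<bar>y - b\<bar> \<noteq> \<bar>x - c\<bar> + \<bar>y - d\<bar>"
proof
  assume h: "\<bar>x - a\<bar> + \<bar>y - b\<bar> = \<bar>x - c\<bar> + \<bar>y - d\<bar>"
  have "even ((\<bar>x - a\<bar> + \<bar>y - b\<bar>) + (\<bar>x - c\<bar> + \<bar>y - d\<bar>))" using h by simp
  moreover have "even (\<bar>x - a\<bar> + \<bar>y - b\<bar> + \<bar>x - c\<bar> + \<bar>y - d\<bar>) = even (a+b+c+d)"
    by (simp add: abs_if) presburger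
  ultimately show False using assms by (simp add: add.assoc)
qed

lemma cutA_res:
  fixes x y a b c d i j :: int
  assumes "a \<le> i" "i < c" "b \<le> j" "j < d" "2*(i+j) + 2 = a+b+c+d"
    and "(x \<le> i \<and> y \<le> j) \<or> (x > i \<and> y > j)"
  shows "\<bar>x - a\<bar> + \<bar>y - b\<bar> \<noteq> \<bar>x - c\<bar> + \<bar>y - d\<bar>"
  using assms by smt

lemma cutD_res:
  fixes x y a b c d i j :: int
  assumes "a \<le> i" "i < c" "d \<le> j" "j < b" "2*i + b + d = 2*j + a + c"
    and "(x \<le> i \<and> y > j) \<or> (x > i \<and> y \<le> j)"
  shows "\<bar>x - a\<bar> + \<bar>y - b\<bar> \<noteq> \<bar>x - c\<bar> + \<bar>y - d\<bar>"
  using assms by smt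

lemma mid_res:
  fixes x y b d :: int
  assumes "\<bar>x - a\<bar> + \<bar>y - b\<bar> = \<bar>x - a\<bar> + \<bar>y - d\<bar>" "b \<noteq> d"
  shows "2*y = b + d"
  using assms by smt

lemma mid_res2:
  fixes x y a c :: int
  assumes "\<bar>x - a\<bar> + \<bar>y - b\<bar> = \<bar>x - c\<bar> + \<bar>y - b\<bar>" "a \<noteq> c"
  shows "2*x = a + c"
  using assms by smt

lemma cutA_iff:
  fixes X Y S T :: int
  shows "(\<bar>X - S\<bar> + \<bar>Y - T\<bar> \<noteq> \<bar>X - (1+S)\<bar> + \<bar>Y - (1+T)\<bar>) \<longleftrightarrow> ((X \<le> S) = (Y \<le> T))"
  by smt

lemma cutD_iff:
  fixes X Y S T :: int
  shows "(\<bar>X - S\<bar> + \<bar>Y - (1+T)\<bar> \<noteq> \<bar>X - (1+S)\<bar> + \<bar>Y - T\<bar>) \<longleftrightarrow> ((X \<le> S) \<noteq> (Y \<le> T))"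
  by smt

lemma row_iff:
  fixes X Y K :: int
  shows "(\<bar>X - K\<bar> + \<bar>Y - 0\<bar> \<noteq> \<bar>X - (2+K)\<bar> + \<bar>Y - 0\<bar>) \<longleftrightarrow> X \<noteq> K + 1"
  by smt

lemma ex_A:
  fixes a b c d :: nat
  assumes "a < c" "b < d" "even (a+b+c+d)"
  shows "\<exists>i j. a \<le> i \<and> i < c \<and> b \<le> j \<and> j < d \<and> 2*(i+j) + 2 = a+b+c+d"
proof -
  obtain p where p: "c = Suc (a + p)" using less_imp_Suc_add[OF assms(1)] by blast
  obtain q where q: "d = Suc (b + q)" using less_imp_Suc_add[OF assms(2)] by blast
  have "even (p + q)" using assms(3) unfolding p q by presburger
  then obtain h where h: "p + q = 2*h" by (rule evenE)
  show ?thesis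
  proof (cases "q \<le> p")
    case True
    have "a \<le> a + h \<and> a + h < c \<and> b \<le> b \<and> b < d \<and> 2*((a + h)+b) + 2 = a+b+c+d"
      using p q True h by auto
    then show ?thesis by blast
  next
    case False
    have "a \<le> a \<and> a < c \<and> b \<le> b + h \<and> b + h < d \<and> 2*(a+(b + h)) + 2 = a+b+c+d"
      using p q False h by auto
    then show ?thesis by blast
  qed
qed

lemma ex_D:
  fixes a b c d :: nat
  assumes "a < c" "d < b" "even (a+b+c+d)"
  shows "\<exists>i j. a \<le> i \<and> i < c \<and> d \<le> j \<and> j < b \<and> 2*i + b + d = 2*j + a + c"
proof -
  obtain p where p: "c = Suc (a + p)" using less_imp_Suc_add[OF assms(1)] by blast
  obtain q where q: "b = Suc (d + q)" using less_imp_Suc_add[OF assms(2)] by blast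
  have "even (p + q)" using assms(3) unfolding p q by presburger
  then obtain h where h: "p + q = 2*h" by (rule evenE)
  show ?thesis
  proof (cases "q \<le> p")
    case True
    have "a \<le> a + h \<and> a + h < c \<and> d \<le> d + q \<and> d + q < b \<and> 2*(a + h) + b + d = 2*(d + q) + a + c"
      using p q True h by auto
    then show ?thesis by blast
  next
    case False
    have "h \<le> q" using False h by linarith
    then obtain r where r: "q = h + r" using le_Suc_ex by blast
    have "a \<le> a \<and> a < c \<and> d \<le> d + r \<and> d + r < b \<and> 2*a + b + d = 2*(d + r) + a + c"
      using p q False h r by auto
    then show ?thesis by blast
  qed
qed


definition cutA :: "nat \<Rightarrow> nat \<Rightarrow> (nat \<times> nat) set" where
  "cutA s t = {p. (fst p \<le> s) = (snd p \<le> t)}"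

definition cutD :: "nat \<Rightarrow> nat \<Rightarrow> (nat \<times> nat) set" where
  "cutD s t = {p. (fst p \<le> s) \<noteq> (snd p \<le> t)}"

definition basic :: "nat \<Rightarrow> nat \<Rightarrow> (nat \<times> nat) set \<Rightarrow> bool" where
  "basic n m B \<longleftrightarrow> (\<exists>i. 0 < i \<and> i + 1 < n \<and> B = {p. fst p \<noteq> i})
     \<or> (\<exists>j. 0 < j \<and> j + 1 < m \<and> B = {p. snd p \<noteq> j})
     \<or> (\<exists>s t. s + 1 < n \<and> t + 1 < m \<and> (B = cutA s t \<or> B = cutD s t))"

lemma basic_pair:
  assumes "basic n m B" "0 < n" "0 < m"
  shows "\<exists>u\<in>grid_vertices n m. \<exists>v\<in>grid_vertices n m. u \<noteq> v \<and> (\<forall>w. resolves w u v \<longleftrightarrow> w \<in> B)"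
  using assms(1) unfolding basic_def
proof (elim disjE exE conjE)
  fix i assume i: "0 < i" "i + 1 < n" "B = {p. fst p \<noteq> i}"
  then obtain k where k: "i = Suc k" by (cases i) auto
  have "\<forall>w. resolves w (k,0) (k+2,0) \<longleftrightarrow> w \<in> B"
  proof
    fix w :: "nat \<times> nat"
    obtain x y where w: "w = (x,y)" by (cases w)
    have "resolves w (k,0) (k+2,0) \<longleftrightarrow> int x \<noteq> int k + 1"
      unfolding w res_int using row_iff[where X="int x" and Y="int y" and K="int k"] by simp
    then show "resolves w (k,0) (k+2,0) \<longleftrightarrow> w \<in> B" using i(3) k w by auto
  qed
  moreover have "(k,0) \<in> grid_vertices n m \<and> (k+2,0) \<in> grid_vertices n m \<and> (k,0) \<noteq> (k+2,0)"
    using i k assms by (auto simp: grid_vertices_def)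
  ultimately show ?thesis apply - apply (rule bexI[of _ "(k,0)"], rule bexI[of _ "(k+2,0)"]) by auto
next
  fix j assume j: "0 < j" "j + 1 < m" "B = {p. snd p \<noteq> j}"
  then obtain k where k: "j = Suc k" by (cases j) auto
  have "\<forall>w. resolves w (0,k) (0,k+2) \<longleftrightarrow> w \<in> B"
  proof
    fix w :: "nat \<times> nat"
    obtain x y where w: "w = (x,y)" by (cases w)
    have "resolves w (0,k) (0,k+2) \<longleftrightarrow> int y \<noteq> int k + 1"
      unfolding w res_int using row_iff[where X="int y" and Y="int x" and K="int k"] by simp
    then show "resolves w (0,k) (0,k+2) \<longleftrightarrow> w \<in> B" using j(3) k w by auto
  qed
  moreover have "(0,k) \<in> grid_vertices n m \<and> (0,k+2) \<in> grid_vertices n m \<and> (0,k) \<noteq> (0,k+2)"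
    using j k assms by (auto simp: grid_vertices_def)
  ultimately show ?thesis apply - apply (rule bexI[of _ "(0,k)"], rule bexI[of _ "(0,k+2)"]) by auto
next
  fix s t assume st: "s + 1 < n" "t + 1 < m" and B: "B = cutA s t"
    have "\<forall>w. resolves w (s,t) (s+1,t+1) \<longleftrightarrow> w \<in> B"
    proof
      fix w :: "nat \<times> nat"
      obtain x y where w: "w = (x,y)" by (cases w)
      have "resolves w (s,t) (s+1,t+1) \<longleftrightarrow> ((int x \<le> int s) = (int y \<le> int t))"
        unfolding w res_int using cutA_iff[of "int x" "int s" "int y" "int t"] by simp
      then show "resolves w (s,t) (s+1,t+1) \<longleftrightarrow> w \<in> B" using B w by (simp add: cutA_def)
    qed
    moreover have "(s,t) \<in> grid_vertices n m \<and> (s+1,t+1) \<in> grid_vertices n m \<and> (s,t) \<noteq> (s+1,t+1)"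
      using st by (auto simp: grid_vertices_def)
    ultimately show ?thesis apply - apply (rule bexI[of _ "(s,t)"], rule bexI[of _ "(s+1,t+1)"]) by auto
next
  fix s t assume st: "s + 1 < n" "t + 1 < m" and B: "B = cutD s t"
    have "\<forall>w. resolves w (s,t+1) (s+1,t) \<longleftrightarrow> w \<in> B"
    proof
      fix w :: "nat \<times> nat"
      obtain x y where w: "w = (x,y)" by (cases w)
      have "resolves w (s,t+1) (s+1,t) \<longleftrightarrow> ((int x \<le> int s) \<noteq> (int y \<le> int t))"
        unfolding w res_int using cutD_iff[of "int x" "int s" "int y" "int t"] by simp
      then show "resolves w (s,t+1) (s+1,t) \<longleftrightarrow> w \<in> B" using B w by (simp add: cutD_def)
    qed
    moreover have "(s,t+1) \<in> grid_vertices n m \<and> (s+1,t) \<in> grid_vertices n m \<and> (s,t+1) \<noteq> (s+1,t)"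
      using st by (auto simp: grid_vertices_def)
    ultimately show ?thesis apply - apply (rule bexI[of _ "(s,t+1)"], rule bexI[of _ "(s+1,t)"]) by auto
qed


lemma basic_sub_res_le:
  assumes "2 \<le> n" "2 \<le> m" "a < n" "c < n" "b < m" "d < m" "(a,b) \<noteq> (c,d)" "a \<le> c"
  shows "\<exists>B. basic n m B \<and> (\<forall>w\<in>B. resolves w (a,b) (c,d))"
proof (cases "even (a+b+c+d)")
  case False
  have "basic n m (cutA 0 0)" unfolding basic_def
    by (rule disjI2, rule disjI2, rule exI[of _ 0], rule exI[of _ 0]) (use assms in auto)
  moreover have "\<forall>w\<in>cutA 0 0. resolves w (a,b) (c,d)"
  proof
    fix w :: "nat \<times> nat" assume "w \<in> cutA 0 0"
    obtain x y where w: "w = (x,y)" by (cases w)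
    have "odd (int (a+b+c+d))" using False by simp
    hence "odd (int a + int b + int c + int d)" by simp
    then show "resolves w (a,b) (c,d)" unfolding w res_int by (rule odd_case)
  qed
  ultimately show ?thesis by blast
next
  case ev: True
  show ?thesis
  proof (cases "a = c")
    case ac: True
    with assms have bd: "b \<noteq> d" by auto
    have "even (b + d)" using ev ac by presburger
    then obtain h where h: "b + d = 2*h" by (rule evenE)
    have h1: "0 < h" using h bd by arith
    have h2: "h + 1 < m" using h bd assms(5,6) by arith
    have "basic n m {p. snd p \<noteq> h}" unfolding basic_def using h1 h2 by blast
    moreover have "\<forall>w\<in>{p. snd p \<noteq> h}. resolves w (a,b) (c,d)"
    proof
      fix w :: "nat \<times> nat" assume wB: "w \<in> {p. snd p \<noteq> h}"
      obtain x y where w: "w = (x,y)" by (cases w)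
      show "resolves w (a,b) (c,d)" unfolding w res_int ac
      proof
        assume eq: "\<bar>int x - int c\<bar> + \<bar>int y - int b\<bar> = \<bar>int x - int c\<bar> + \<bar>int y - int d\<bar>"
        have "int b \<noteq> int d" using bd by simp
        from mid_res[OF eq this] have "2 * int y = int b + int d" .
        hence "2 * y = b + d" by linarith
        hence "y = h" using h by simp
        thus False using wB w by simp
      qed
    qed
    ultimately show ?thesis by blast
  next
    case anc: False
    hence ac: "a < c" using assms(8) by simp
    show ?thesis
    proof (cases "b = d")
      case bd: True
      have "even (a + c)" using ev bd by presburger
      then obtain h where h: "a + c = 2*h" by (rule evenE)
      have h1: "0 < h" using h ac by arith
      have h2: "h + 1 < n" using h ac assms(3,4) by arith
      have "basic n m {p. fst p \<noteq> h}" unfolding basic_def using h1 h2 by blast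
      moreover have "\<forall>w\<in>{p. fst p \<noteq> h}. resolves w (a,b) (c,d)"
      proof
        fix w :: "nat \<times> nat" assume wB: "w \<in> {p. fst p \<noteq> h}"
        obtain x y where w: "w = (x,y)" by (cases w)
        show "resolves w (a,b) (c,d)" unfolding w res_int bd
        proof
          assume eq: "\<bar>int x - int a\<bar> + \<bar>int y - int d\<bar> = \<bar>int x - int c\<bar> + \<bar>int y - int d\<bar>"
          have "int a \<noteq> int c" using ac by simp
          from mid_res2[OF eq this] have "2 * int x = int a + int c" .
          hence "2 * x = a + c" by linarith
          hence "x = h" using h by simp
          thus False using wB w by simp
        qed
      qed
      ultimately show ?thesis by blast
    next
      case bnd: False
      show ?thesis
      proof (cases "b < d")
        case bld: True
        obtain i j where ij: "a \<le> i" "i < c" "b \<le> j" "j < d" "2*(i+j) + 2 = a+b+c+d"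
          using ex_A[OF ac bld ev] by blast
        have e: "2*(int i + int j) + 2 = int a + int b + int c + int d"
          using arg_cong[OF ij(5), of int] by simp
        have "basic n m (cutA i j)" unfolding basic_def
          by (rule disjI2, rule disjI2, rule exI[of _ i], rule exI[of _ j]) (use assms ij in auto)
        moreover have "\<forall>w\<in>cutA i j. resolves w (a,b) (c,d)"
        proof
          fix w :: "nat \<times> nat" assume wB: "w \<in> cutA i j"
          obtain x y where w: "w = (x,y)" by (cases w)
          have dj: "(int x \<le> int i \<and> int y \<le> int j) \<or> (int x > int i \<and> int y > int j)"
            using wB w by (auto simp: cutA_def)
          show "resolves w (a,b) (c,d)" unfolding w res_int
            by (rule cutA_res[where a="int a" and b="int b" and c="int c" and d="int d"
                  and i="int i" and j="int j"]) (use ij e dj in auto)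
        qed
        ultimately show ?thesis by blast
      next
        case False
        with bnd have dlb: "d < b" by simp
        obtain i j where ij: "a \<le> i" "i < c" "d \<le> j" "j < b" "2*i + b + d = 2*j + a + c"
          using ex_D[OF ac dlb ev] by blast
        have e: "2*int i + int b + int d = 2*int j + int a + int c"
          using arg_cong[OF ij(5), of int] by simp
        have "basic n m (cutD i j)" unfolding basic_def
          by (rule disjI2, rule disjI2, rule exI[of _ i], rule exI[of _ j]) (use assms ij in auto)
        moreover have "\<forall>w\<in>cutD i j. resolves w (a,b) (c,d)"
        proof
          fix w :: "nat \<times> nat" assume wB: "w \<in> cutD i j"
          obtain x y where w: "w = (x,y)" by (cases w)
          have dj: "(int x \<le> int i \<and> int y > int j) \<or> (int x > int i \<and> int y \<le> int j)"
            using wB w by (auto simp: cutD_def)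
          show "resolves w (a,b) (c,d)" unfolding w res_int
            by (rule cutD_res[where a="int a" and b="int b" and c="int c" and d="int d"
                  and i="int i" and j="int j"]) (use ij e dj in auto)
        qed
        ultimately show ?thesis by blast
      qed
    qed
  qed
qed

lemma basic_sub_res:
  assumes "2 \<le> n" "2 \<le> m" "u \<in> grid_vertices n m" "v \<in> grid_vertices n m" "u \<noteq> v"
  shows "\<exists>B. basic n m B \<and> (\<forall>w\<in>B. resolves w u v)"
proof -
  obtain a b where u: "u = (a,b)" by (cases u)
  obtain c d where v: "v = (c,d)" by (cases v)
  have g: "a < n" "c < n" "b < m" "d < m" using assms(3,4) u v by (auto simp: grid_vertices_def)
  show ?thesis
  proof (cases "a \<le> c")
    case True
    then show ?thesis using basic_sub_res_le[OF assms(1,2) g] assms(5) u v by blast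
  next
    case False
    then have "\<exists>B. basic n m B \<and> (\<forall>w\<in>B. resolves w (c,d) (a,b))"
      using basic_sub_res_le[OF assms(1,2) g(2,1,4,3)] assms(5) u v by auto
    then show ?thesis using u v res_sym by metis
  qed
qed

lemma resolving_iff:
  assumes "2 \<le> n" "2 \<le> m"
  shows "resolving_set n m R \<longleftrightarrow> R \<subseteq> grid_vertices n m \<and> (\<forall>B. basic n m B \<longrightarrow> R \<inter> B \<noteq> {})"
proof
  assume r: "resolving_set n m R"
  show "R \<subseteq> grid_vertices n m \<and> (\<forall>B. basic n m B \<longrightarrow> R \<inter> B \<noteq> {})"
  proof (intro conjI allI impI)
    show "R \<subseteq> grid_vertices n m" using r unfolding resolving_set_def by blast
    fix B assume "basic n m B"
    then obtain u v where uv: "u \<in> grid_vertices n m" "v \<in> grid_vertices n m" "u \<noteq> v"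
      "\<forall>w. resolves w u v \<longleftrightarrow> w \<in> B"
      using basic_pair[of n m B] assms by auto
    then obtain w where "w \<in> R" "resolves w u v" using r unfolding resolving_set_def by blast
    thus "R \<inter> B \<noteq> {}" using uv by blast
  qed
next
  assume h: "R \<subseteq> grid_vertices n m \<and> (\<forall>B. basic n m B \<longrightarrow> R \<inter> B \<noteq> {})"
  show "resolving_set n m R" unfolding resolving_set_def
  proof (intro conjI ballI impI)
    show "R \<subseteq> grid_vertices n m" using h by blast
    fix u v assume "u \<in> grid_vertices n m" "v \<in> grid_vertices n m" "u \<noteq> v"
    then obtain B where "basic n m B" "\<forall>w\<in>B. resolves w u v" using basic_sub_res assms by blast
    then show "\<exists>w\<in>R. resolves w u v" using h by blast
  qed
qed

lemma minimal_witness: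
  assumes "2 \<le> n" "2 \<le> m" "minimal_resolving_set n m R" "w \<in> R"
  shows "\<exists>B. basic n m B \<and> R \<inter> B = {w}"
proof -
  have r: "resolving_set n m R" and nr: "\<not> resolving_set n m (R - {w})"
    using assms(3,4) unfolding minimal_resolving_set_def by auto
  have sub: "R - {w} \<subseteq> grid_vertices n m" using r resolving_iff[OF assms(1,2)] by blast
  from nr sub obtain B where B: "basic n m B" "(R - {w}) \<inter> B = {}"
    using resolving_iff[OF assms(1,2), of "R - {w}"] by blast
  have "R \<inter> B \<noteq> {}" using r B(1) resolving_iff[OF assms(1,2)] by blast
  then have "R \<inter> B = {w}" using B(2) by blast
  with B(1) show ?thesis by blast
qed


definition witnessed :: "nat \<Rightarrow> nat \<Rightarrow> (nat \<times> nat) set \<Rightarrow> bool" where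
  "witnessed n m R \<longleftrightarrow> (\<forall>w\<in>R. \<exists>B. basic n m B \<and> R \<inter> B = {w})"

definition sig :: "nat \<Rightarrow> nat \<Rightarrow> nat \<times> nat \<Rightarrow> bool" where
  "sig s t p = ((fst p \<le> s) = (snd p \<le> t))"

definition cutwit :: "nat \<Rightarrow> nat \<Rightarrow> (nat \<times> nat) set \<Rightarrow> bool" where
  "cutwit n m R \<longleftrightarrow> (\<forall>w\<in>R. \<exists>s t. s + 1 < n \<and> t + 1 < m \<and> (\<forall>q\<in>R. q \<noteq> w \<longrightarrow> sig s t q \<noteq> sig s t w))"

lemma three_row:
  assumes "witnessed n m R" "a \<in> R" "b \<in> R" "c \<in> R" "fst a = fst b" "fst b = fst c"
    "snd a < snd b" "snd b < snd c"
  shows False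
proof -
  obtain B where B: "basic n m B" "R \<inter> B = {b}" using assms(1,3) unfolding witnessed_def by blast
  have ab: "a \<noteq> b" "c \<noteq> b" using assms(7,8) by auto
  have bB: "b \<in> B" and aB: "a \<notin> B" and cB: "c \<notin> B" using B(2) assms(2,3,4) ab by blast+
  from B(1) show False unfolding basic_def
  proof (elim disjE exE conjE)
    fix i assume "B = {p. fst p \<noteq> i}"
    then show False using bB aB assms(5) by auto
  next
    fix j assume "B = {p. snd p \<noteq> j}"
    then show False using bB aB cB assms(7,8) by auto
  next
    fix s t assume "B = cutA s t"
    then show False using bB aB cB assms(5-8) by (auto simp: cutA_def)
  next
    fix s t assume "B = cutD s t"
    then show False using bB aB cB assms(5-8) by (auto simp: cutD_def)
  qed
qed

lemma three_col:
  assumes "witnessed n m R" "a \<in> R" "b \<in> R" "c \<in> R" "snd a = snd b" "snd b = snd c"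
    "fst a < fst b" "fst b < fst c"
  shows False
proof -
  obtain B where B: "basic n m B" "R \<inter> B = {b}" using assms(1,3) unfolding witnessed_def by blast
  have ab: "a \<noteq> b" "c \<noteq> b" using assms(7,8) by auto
  have bB: "b \<in> B" and aB: "a \<notin> B" and cB: "c \<notin> B" using B(2) assms(2,3,4) ab by blast+
  from B(1) show False unfolding basic_def
  proof (elim disjE exE conjE)
    fix i assume "B = {p. fst p \<noteq> i}"
    then show False using bB aB cB assms(7,8) by auto
  next
    fix j assume "B = {p. snd p \<noteq> j}"
    then show False using bB aB assms(5) by auto
  next
    fix s t assume "B = cutA s t"
    then show False using bB aB cB assms(5-8) by (auto simp: cutA_def)
  next
    fix s t assume "B = cutD s t"
    then show False using bB aB cB assms(5-8) by (auto simp: cutD_def)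
  qed
qed

lemma three_sorted:
  fixes x y z :: nat
  assumes "x \<noteq> y" "y \<noteq> z" "x \<noteq> z"
  shows "\<exists>a\<in>{x,y,z}. \<exists>b\<in>{x,y,z}. \<exists>c\<in>{x,y,z}. a < b \<and> b < c"
  using assms by (cases "x < y"; cases "y < z"; cases "x < z"; auto)

lemma card_le2:
  fixes f :: "'a \<Rightarrow> nat"
  assumes "finite S" "inj_on f S" "\<not> (\<exists>a\<in>S. \<exists>b\<in>S. \<exists>c\<in>S. f a < f b \<and> f b < f c)"
  shows "card S \<le> 2"
proof (rule ccontr)
  assume "\<not> card S \<le> 2"
  hence "3 \<le> card (f ` S)" using card_image[OF assms(2)] by simp
  then obtain T where T: "T \<subseteq> f ` S" "card T = 3" by (metis obtain_subset_with_card_n)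
  then obtain x y z where xyz: "T = {x,y,z}" "x \<noteq> y" "y \<noteq> z" "x \<noteq> z"
    unfolding card_3_iff by blast
  then obtain a b c where "a \<in> T" "b \<in> T" "c \<in> T" "a < b" "b < c"
    using three_sorted[OF xyz(2-4)] by blast
  then show False using T(1) assms(3) by blast
qed

lemma row_bound:
  assumes "witnessed n m R" "finite R"
  shows "card (R \<inter> {p. fst p = x}) \<le> 2"
proof (rule card_le2[where f = snd])
  show "finite (R \<inter> {p. fst p = x})" using assms(2) by simp
  show "inj_on snd (R \<inter> {p. fst p = x})" by (auto simp: inj_on_def prod_eq_iff)
  show "\<not> (\<exists>a\<in>R \<inter> {p. fst p = x}. \<exists>b\<in>R \<inter> {p. fst p = x}. \<exists>c\<in>R \<inter> {p. fst p = x}. snd a < snd b \<and> snd b < snd c)"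
  proof
    assume "\<exists>a\<in>R \<inter> {p. fst p = x}. \<exists>b\<in>R \<inter> {p. fst p = x}. \<exists>c\<in>R \<inter> {p. fst p = x}. snd a < snd b \<and> snd b < snd c"
    then obtain a b c where "a \<in> R" "b \<in> R" "c \<in> R" "fst a = x" "fst b = x" "fst c = x"
      "snd a < snd b" "snd b < snd c" by blast
    then show False using three_row[OF assms(1), of a b c] by simp
  qed
qed

lemma col_bound:
  assumes "witnessed n m R" "finite R"
  shows "card (R \<inter> {p. snd p = y}) \<le> 2"
proof (rule card_le2[where f = fst])
  show "finite (R \<inter> {p. snd p = y})" using assms(2) by simp
  show "inj_on fst (R \<inter> {p. snd p = y})" by (auto simp: inj_on_def prod_eq_iff)
  show "\<not> (\<exists>a\<in>R \<inter> {p. snd p = y}. \<exists>b\<in>R \<inter> {p. snd p = y}. \<exists>c\<in>R \<inter> {p. snd p = y}. fst a < fst b \<and> fst b < fst c)"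
  proof
    assume "\<exists>a\<in>R \<inter> {p. snd p = y}. \<exists>b\<in>R \<inter> {p. snd p = y}. \<exists>c\<in>R \<inter> {p. snd p = y}. fst a < fst b \<and> fst b < fst c"
    then obtain a b c where "a \<in> R" "b \<in> R" "c \<in> R" "snd a = y" "snd b = y" "snd c = y"
      "fst a < fst b" "fst b < fst c" by blast
    then show False using three_col[OF assms(1), of a b c] by simp
  qed
qed

lemma witnessed_cutwit:
  assumes "witnessed n m R" "finite R" "5 \<le> card R"
  shows "cutwit n m R"
  unfolding cutwit_def
proof
  fix w assume wR: "w \<in> R"
  obtain B where B: "basic n m B" "R \<inter> B = {w}" using assms(1) wR unfolding witnessed_def by blast
  have c4: "4 \<le> card (R - {w})" using assms(3) wR assms(2) by (simp add: card_Diff_singleton)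
  from B(1) show "\<exists>s t. s + 1 < n \<and> t + 1 < m \<and> (\<forall>q\<in>R. q \<noteq> w \<longrightarrow> sig s t q \<noteq> sig s t w)"
    unfolding basic_def
  proof (elim disjE exE conjE)
    fix i assume Bi: "B = {p. fst p \<noteq> i}"
    have "R - {w} \<subseteq> R \<inter> {p. fst p = i}" using B(2) Bi by blast
    hence "card (R - {w}) \<le> card (R \<inter> {p. fst p = i})" using assms(2) by (intro card_mono) auto
    with row_bound[OF assms(1,2), of i] c4 show ?thesis by linarith
  next
    fix j assume Bj: "B = {p. snd p \<noteq> j}"
    have "R - {w} \<subseteq> R \<inter> {p. snd p = j}" using B(2) Bj by blast
    hence "card (R - {w}) \<le> card (R \<inter> {p. snd p = j})" using assms(2) by (intro card_mono) auto
    with col_bound[OF assms(1,2), of j] c4 show ?thesis by linarith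
  next
    fix s t assume st: "s + 1 < n" "t + 1 < m" "B = cutA s t"
    have "\<forall>q\<in>R. q \<noteq> w \<longrightarrow> sig s t q \<noteq> sig s t w"
      using B(2) st(3) by (auto simp: cutA_def sig_def)
    with st show ?thesis by blast
  next
    fix s t assume st: "s + 1 < n" "t + 1 < m" "B = cutD s t"
    have "\<forall>q\<in>R. q \<noteq> w \<longrightarrow> sig s t q \<noteq> sig s t w"
      using B(2) st(3) by (auto simp: cutD_def sig_def)
    with st show ?thesis by blast
  qed
qed

lemma main_claim:
  assumes "cutwit n m R" "a \<in> R" "b \<in> R" "c \<in> R" "fst a = fst b" "snd a < snd b"
    "c \<noteq> a" "c \<noteq> b" "\<forall>s. s + 1 < n \<longrightarrow> (fst a \<le> s) \<noteq> (fst c \<le> s)"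
  shows "R \<subseteq> {a, b, c}"
proof -
  have ba: "b \<noteq> a" using assms(6) by auto
  obtain s t where st: "s + 1 < n" "\<forall>q\<in>R. q \<noteq> a \<longrightarrow> sig s t q \<noteq> sig s t a"
    using assms(1,2) unfolding cutwit_def by blast
  have "sig s t b \<noteq> sig s t a" "sig s t c \<noteq> sig s t a" using st(2) assms(3,4,7) ba by auto
  moreover have "(fst a \<le> s) \<noteq> (fst c \<le> s)" using assms(9) st(1) by blast
  ultimately have c1: "snd c < snd b" using assms(5,6) unfolding sig_def by auto
  obtain s' t' where st': "s' + 1 < n" "\<forall>q\<in>R. q \<noteq> b \<longrightarrow> sig s' t' q \<noteq> sig s' t' b"
    using assms(1,3) unfolding cutwit_def by blast
  have "sig s' t' a \<noteq> sig s' t' b" "sig s' t' c \<noteq> sig s' t' b" using st'(2) assms(2,4,8) ba by auto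
  moreover have "(fst a \<le> s') \<noteq> (fst c \<le> s')" using assms(9) st'(1) by blast
  ultimately have c2: "snd a < snd c" using assms(5,6) unfolding sig_def by auto
  show ?thesis
  proof
    fix e assume eR: "e \<in> R"
    show "e \<in> {a, b, c}"
    proof (rule ccontr)
      assume ne: "e \<notin> {a, b, c}"
      obtain s'' t'' where st'': "s'' + 1 < n" "\<forall>q\<in>R. q \<noteq> e \<longrightarrow> sig s'' t'' q \<noteq> sig s'' t'' e"
        using assms(1) eR unfolding cutwit_def by blast
      have h: "sig s'' t'' a \<noteq> sig s'' t'' e" "sig s'' t'' b \<noteq> sig s'' t'' e" "sig s'' t'' c \<noteq> sig s'' t'' e"
        using st''(2) assms(2,3,4) ne by auto
      have f: "(fst a \<le> s'') \<noteq> (fst c \<le> s'')" using assms(9) st''(1) by blast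
      show False
      proof (cases "snd a \<le> t''")
        case True
        then show False using h f c1 c2 assms(5) unfolding sig_def by auto
      next
        case False
        then show False using h f c1 c2 assms(5) unfolding sig_def by auto
      qed
    qed
  qed
qed


lemma two_and_other:
  assumes "cutwit n m R" "finite R" "5 \<le> card R" "x1 \<noteq> x2"
    "\<forall>s. s + 1 < n \<longrightarrow> (x1 \<le> s) \<noteq> (x2 \<le> s)"
    "2 \<le> card (R \<inter> {p. fst p = x1})" "c \<in> R" "fst c = x2"
  shows False
proof -
  obtain T where T: "T \<subseteq> R \<inter> {p. fst p = x1}" "card T = 2" using assms(6) by (metis obtain_subset_with_card_n)
  then obtain a b where ab: "T = {a,b}" "a \<noteq> b" unfolding card_2_iff by blast
  have aR: "a \<in> R" "fst a = x1" and bR: "b \<in> R" "fst b = x1" using T(1) ab(1) by auto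
  have sab: "snd a \<noteq> snd b" using ab(2) aR(2) bR(2) by (auto simp: prod_eq_iff)
  have ca: "c \<noteq> a" "c \<noteq> b" using assms(4,8) aR(2) bR(2) by auto
  have sub: "R \<subseteq> {a, b, c}"
  proof (cases "snd a < snd b")
    case True
    show ?thesis by (rule main_claim[OF assms(1) aR(1) bR(1) assms(7)]) (use aR bR True ca assms(5,8) in auto)
  next
    case False
    hence "snd b < snd a" using sab by simp
    have "R \<subseteq> {b, a, c}"
      by (rule main_claim[OF assms(1) bR(1) aR(1) assms(7)]) (use aR bR \<open>snd b < snd a\<close> ca assms(5,8) in auto)
    thus ?thesis by auto
  qed
  have "card R \<le> card {a, b, c}" using sub by (intro card_mono) auto
  also have "\<dots> \<le> 3" by (simp add: card_insert_if)
  finally show False using assms(3) by simp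
qed

lemma grid_finite: "finite (grid_vertices n m)"
proof -
  have "grid_vertices n m = {..<n} \<times> {..<m}" by (auto simp: grid_vertices_def)
  thus ?thesis by simp
qed

lemma upper_bound:
  assumes "3 \<le> n" "n \<le> m" "minimal_resolving_set n m R"
  shows "card R \<le> 2 * n - 2"
proof (cases "card R \<le> 4")
  case True
  then show ?thesis using assms(1) by linarith
next
  case False
  hence c5: "5 \<le> card R" by simp
  have n2: "2 \<le> n" and m2: "2 \<le> m" using assms(1,2) by auto
  have res: "resolving_set n m R" using assms(3) unfolding minimal_resolving_set_def by blast
  hence sub: "R \<subseteq> grid_vertices n m" unfolding resolving_set_def by blast
  hence fin: "finite R" using grid_finite finite_subset by blast
  have wit: "witnessed n m R" unfolding witnessed_def using minimal_witness[OF n2 m2 assms(3)] by blast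
  have cw: "cutwit n m R" by (rule witnessed_cutwit[OF wit fin c5])
  define row where "row x = R \<inter> {p. fst p = x}" for x
  have rb: "card (row x) \<le> 2" for x unfolding row_def by (rule row_bound[OF wit fin])
  have "R \<subseteq> row 0 \<union> row (n - 1) \<union> (\<Union>x\<in>{1..n-2}. row x)"
  proof
    fix p assume pR: "p \<in> R"
    hence "fst p < n" using sub by (auto simp: grid_vertices_def)
    hence "fst p = 0 \<or> fst p = n - 1 \<or> fst p \<in> {1..n-2}" by auto
    thus "p \<in> row 0 \<union> row (n - 1) \<union> (\<Union>x\<in>{1..n-2}. row x)" using pR unfolding row_def by auto
  qed
  hence "card R \<le> card (row 0 \<union> row (n - 1) \<union> (\<Union>x\<in>{1..n-2}. row x))"
    using fin unfolding row_def by (intro card_mono) auto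
  also have "\<dots> \<le> card (row 0 \<union> row (n - 1)) + card (\<Union>x\<in>{1..n-2}. row x)" by (rule card_Un_le)
  also have "\<dots> \<le> card (row 0) + card (row (n - 1)) + card (\<Union>x\<in>{1..n-2}. row x)"
    using card_Un_le[of "row 0" "row (n - 1)"] by linarith
  also have "card (\<Union>x\<in>{1..n-2}. row x) \<le> (\<Sum>x\<in>{1..n-2}. card (row x))" by (rule card_UN_le) simp
  also have "(\<Sum>x\<in>{1..n-2}. card (row x)) \<le> of_nat (card {1..n-2}) * 2" by (rule sum_bounded_above) (rule rb)
  also have "of_nat (card {1..n-2}) * 2 = (n - 2) * (2::nat)" by simp
  finally have tot: "card R \<le> card (row 0) + card (row (n - 1)) + (n - 2) * 2" by simp
  have sep1: "\<forall>s. s + 1 < n \<longrightarrow> ((0::nat) \<le> s) \<noteq> (n - 1 \<le> s)" by auto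
  have sep2: "\<forall>s. s + 1 < n \<longrightarrow> (n - 1 \<le> s) \<noteq> ((0::nat) \<le> s)" by auto
  have neq: "(0::nat) \<noteq> n - 1" "n - 1 \<noteq> (0::nat)" using n2 by auto
  have cl1: "card (row (n - 1)) = 0" if "2 \<le> card (row 0)"
  proof (rule ccontr)
    assume "card (row (n - 1)) \<noteq> 0"
    then obtain c where "c \<in> row (n - 1)" by (metis all_not_in_conv card.empty)
    hence "c \<in> R" "fst c = n - 1" unfolding row_def by auto
    then show False using two_and_other[OF cw fin c5 neq(1) sep1] that unfolding row_def by blast
  qed
  have cl2: "card (row 0) = 0" if "2 \<le> card (row (n - 1))"
  proof (rule ccontr)
    assume "card (row 0) \<noteq> 0"
    then obtain c where "c \<in> row 0" by (metis all_not_in_conv card.empty)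
    hence "c \<in> R" "fst c = 0" unfolding row_def by auto
    then show False using two_and_other[OF cw fin c5 neq(2) sep2] that unfolding row_def by blast
  qed
  have "card (row 0) + card (row (n - 1)) \<le> 2"
    using rb[of 0] rb[of "n - 1"] cl1 cl2 by linarith
  with tot assms(1) show ?thesis by linarith
qed


definition R0 :: "nat \<Rightarrow> nat \<Rightarrow> (nat \<times> nat) set" where
  "R0 n m = (\<lambda>k. (Suc k, k)) ` {..<n-1} \<union> (\<lambda>k. (Suc k, Suc k)) ` {..<n-2} \<union> {(n-1, m-1)}"

lemma R0_card:
  assumes "3 \<le> n" "n \<le> m"
  shows "card (R0 n m) = 2 * n - 2"
proof -
  let ?A = "(\<lambda>k. (Suc k, k)) ` {..<n-1}"
  let ?B = "(\<lambda>k. (Suc k, Suc k)) ` {..<n-2}"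
  have cA: "card ?A = n - 1" by (subst card_image) (auto simp: inj_on_def)
  have cB: "card ?B = n - 2" by (subst card_image) (auto simp: inj_on_def)
  have d1: "?A \<inter> ?B = {}" by auto
  have d2: "(?A \<union> ?B) \<inter> {(n-1, m-1)} = {}" using assms by auto
  have "card (?A \<union> ?B \<union> {(n-1, m-1)}) = card (?A \<union> ?B) + 1"
    using d2 by (subst card_Un_disjoint) auto
  also have "card (?A \<union> ?B) = card ?A + card ?B" using d1 by (subst card_Un_disjoint) auto
  finally have "card (?A \<union> ?B \<union> {(n-1, m-1)}) = (n - 1) + (n - 2) + 1" using cA cB by simp
  moreover have "(n - 1) + (n - 2) + 1 = 2 * n - 2" using assms by arith
  ultimately show ?thesis unfolding R0_def by (rule trans)
qed

lemma R0_grid: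
  assumes "3 \<le> n" "n \<le> m"
  shows "R0 n m \<subseteq> grid_vertices n m"
  using assms by (auto simp: R0_def grid_vertices_def)

lemma R0_meets:
  assumes "3 \<le> n" "n \<le> m" "basic n m B"
  shows "R0 n m \<inter> B \<noteq> {}"
proof -
  have C: "(n-1, m-1) \<in> R0 n m" by (simp add: R0_def)
  from assms(3) show ?thesis unfolding basic_def
  proof (elim disjE exE conjE)
    fix i assume "0 < i" "i + 1 < n" "B = {p. fst p \<noteq> i}"
    then have "(n-1, m-1) \<in> B" by auto
    with C show ?thesis by blast
  next
    fix j assume "0 < j" "j + 1 < m" "B = {p. snd p \<noteq> j}"
    then have "(n-1, m-1) \<in> B" by auto
    with C show ?thesis by blast
  next
    fix s t assume "s + 1 < n" "t + 1 < m" "B = cutA s t"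
    then have "(n-1, m-1) \<in> B" by (auto simp: cutA_def)
    with C show ?thesis by blast
  next
    fix s t assume st: "s + 1 < n" "t + 1 < m" and B: "B = cutD s t"
    show ?thesis
    proof (cases "t < s")
      case True
      then obtain k where k: "s = Suc k" by (cases s) auto
      have "(s, s) \<in> R0 n m" unfolding R0_def
        using k st by (intro UnI1 UnI2 image_eqI[where x = k]) auto
      moreover have "(s, s) \<in> B" using B True by (auto simp: cutD_def)
      ultimately show ?thesis by blast
    next
      case False
      have "(Suc s, s) \<in> R0 n m" unfolding R0_def
        using st by (intro UnI1 image_eqI[where x = s]) auto
      moreover have "(Suc s, s) \<in> B" using B False by (auto simp: cutD_def)
      ultimately show ?thesis by blast
    qed
  qed
qed

lemma R0_crit:
  assumes "3 \<le> n" "n \<le> m" "w \<in> R0 n m"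
  shows "\<exists>B. basic n m B \<and> (R0 n m - {w}) \<inter> B = {}"
proof -
  from assms(3) consider (A) k where "k < n - 1" "w = (Suc k, k)"
    | (B) k where "k < n - 2" "w = (Suc k, Suc k)" | (C) "w = (n-1, m-1)"
    unfolding R0_def by blast
  then show ?thesis
  proof cases
    case (A k)
    have "basic n m (cutD k k)" unfolding basic_def
      by (rule disjI2, rule disjI2, rule exI[of _ k], rule exI[of _ k]) (use A assms in auto)
    moreover have "(R0 n m - {w}) \<inter> cutD k k = {}"
      using A assms by (auto simp: R0_def cutD_def)
    ultimately show ?thesis by blast
  next
    case (B k)
    have "basic n m (cutD (Suc k) k)" unfolding basic_def
      by (rule disjI2, rule disjI2, rule exI[of _ "Suc k"], rule exI[of _ k]) (use B assms in auto)
    moreover have "(R0 n m - {w}) \<inter> cutD (Suc k) k = {}"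
      using B assms by (auto simp: R0_def cutD_def)
    ultimately show ?thesis by blast
  next
    case C
    have "basic n m (cutA 0 (n - 2))" unfolding basic_def
      by (rule disjI2, rule disjI2, rule exI[of _ 0], rule exI[of _ "n - 2"]) (use assms in auto)
    moreover have "(R0 n m - {w}) \<inter> cutA 0 (n - 2) = {}"
      using C assms by (auto simp: R0_def cutA_def)
    ultimately show ?thesis by blast
  qed
qed

theorem theorem5:
  fixes n m :: nat
  assumes "3 \<le> n" and "n \<le> m"
  shows "(\<forall>R. minimal_resolving_set n m R \<longrightarrow> card R \<le> 2 * n - 2)
       \<and> (\<exists>R. minimal_resolving_set n m R \<and> card R = 2 * n - 2)"
proof
  show "\<forall>R. minimal_resolving_set n m R \<longrightarrow> card R \<le> 2 * n - 2"
    using upper_bound[OF assms] by blast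
next
  have n2: "2 \<le> n" and m2: "2 \<le> m" using assms by auto
  have "resolving_set n m (R0 n m)"
    using resolving_iff[OF n2 m2] R0_grid[OF assms] R0_meets[OF assms] by blast
  moreover have "\<forall>v\<in>R0 n m. \<not> resolving_set n m (R0 n m - {v})"
  proof
    fix v assume "v \<in> R0 n m"
    then obtain B where "basic n m B" "(R0 n m - {v}) \<inter> B = {}" using R0_crit[OF assms] by blast
    then show "\<not> resolving_set n m (R0 n m - {v})" using resolving_iff[OF n2 m2] by blast
  qed
  ultimately have "minimal_resolving_set n m (R0 n m)" unfolding minimal_resolving_set_def by blast
  then show "\<exists>R. minimal_resolving_set n m R \<and> card R = 2 * n - 2" using R0_card[OF assms] by blast
qed

end
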